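(* Let $\alpha\in(0,1/2)$ and $N\in\mathbb{N}$. There exist $h_0>0$ and $C>0$ such that for all $h\in(0,h_0]$, all $m\in\mathbb{R}$ and every eigenfunction $v_{h,m}$ associated with $\lambda_{1,m}(h)$, $$0\leq 1-\frac{\int_{r_{\min}-h^\alpha}^{r_{\min}+h^\alpha}e^{-2\phi/h}|v_{h,m}|^2dr}{\int_{\rho_1}^{\rho_2}e^{-2\phi/h}|v_{h,m}|^2dr}\leq C\,h^N f_{1,h}(m).$$ Consequently, for every sufficiently small fixed $\delta>0$, the same estimate holds with the numerator replaced by $\int_{\rho_1+\delta}^{\rho_2-\delta}e^{-2\phi/h}|v_{h,m}|^2dr$ (for $h$ small enough depending on $\delta$).
   Context: $0<\rho_1<\rho_2$; $B\in C^\infty([\rho_1,\rho_2])$ with $\min B>0$; $\phi$ solves $\phi''+\phi'/r=B$ on $(\rho_1,\rho_2)$, $\phi(\rho_1)=\phi(\rho_2)=0$; $\phi_{\min}=\min\phi<0$ attained at a unique $r_{\min}\in(\rho_1,\rho_2)$. $\lambda_{1,m}(h)$ is the lowest eigenvalue of $-h^2(\partial_r^2+\frac{1}{4r^2})+(\frac{hm}{r}-\phi')^2-hB$ on $L^2((\rho_1,\rho_2);dr)$ with domain $H^1_0\cap H^2$, and $f_{1,h}(m)=h^{-1/2}e^{-2\phi_{\min}/h}\lambda_{1,m}(h)$. *)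

theory Defs
  imports "HOL-Analysis.Analysis"
begin

text \<open>C-infinity on the closed interval [a,b]: a tower of one-sided derivatives.\<close>
definition smooth_on_interval :: "real \<Rightarrow> real \<Rightarrow> (real \<Rightarrow> real) \<Rightarrow> bool" where
  "smooth_on_interval a b f \<longleftrightarrow>
     (\<exists>D :: nat \<Rightarrow> real \<Rightarrow> real. (\<forall>x\<in>{a..b}. D 0 x = f x) \<and>
        (\<forall>k. \<forall>x\<in>{a..b}. (D k has_real_derivative D (Suc k) x) (at x within {a..b})))"

text \<open>(lam, v) is an eigenpair of
  -h^2 (d^2/dr^2 + 1/(4 r^2)) + (h m / r - phi')^2 - h B  on (rho1, rho2)
  with Dirichlet boundary conditions; v is taken C^2 on the closed interval
  (eigenfunctions in H^1_0 \<inter> H^2 are smooth up to the boundary by elliptic regularity).\<close>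
definition is_eigenpair ::
  "real \<Rightarrow> real \<Rightarrow> (real \<Rightarrow> real) \<Rightarrow> (real \<Rightarrow> real) \<Rightarrow> real \<Rightarrow> real \<Rightarrow> real
   \<Rightarrow> (real \<Rightarrow> complex) \<Rightarrow> bool" where
  "is_eigenpair \<rho>1 \<rho>2 B dphi h m lam v \<longleftrightarrow>
     (\<exists>v1 v2 :: real \<Rightarrow> complex.
        (\<forall>x\<in>{\<rho>1..\<rho>2}. (v has_vector_derivative v1 x) (at x within {\<rho>1..\<rho>2}) \<and>
                         (v1 has_vector_derivative v2 x) (at x within {\<rho>1..\<rho>2})) \<and>
        continuous_on {\<rho>1..\<rho>2} v2 \<and>
        v \<rho>1 = 0 \<and> v \<rho>2 = 0 \<and> (\<exists>x\<in>{\<rho>1..\<rho>2}. v x \<noteq> 0) \<and>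
        (\<forall>x\<in>{\<rho>1<..<\<rho>2}.
           - (h^2) *\<^sub>R (v2 x + (1 / (4 * x^2)) *\<^sub>R v x)
           + ((h * m / x - dphi x)^2 - h * B x) *\<^sub>R v x = lam *\<^sub>R v x))"

definition lowest_eig ::
  "real \<Rightarrow> real \<Rightarrow> (real \<Rightarrow> real) \<Rightarrow> (real \<Rightarrow> real) \<Rightarrow> real \<Rightarrow> real \<Rightarrow> real" where
  "lowest_eig \<rho>1 \<rho>2 B dphi h m = Inf {lam. \<exists>v. is_eigenpair \<rho>1 \<rho>2 B dphi h m lam v}"

definition wmass :: "(real \<Rightarrow> real) \<Rightarrow> real \<Rightarrow> (real \<Rightarrow> complex) \<Rightarrow> real \<Rightarrow> real \<Rightarrow> real" where
  "wmass phi h v a b = integral {a..b} (\<lambda>r. exp (- 2 * phi r / h) * (cmod (v r))^2)"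

definition f1h ::
  "real \<Rightarrow> real \<Rightarrow> (real \<Rightarrow> real) \<Rightarrow> (real \<Rightarrow> real) \<Rightarrow> real \<Rightarrow> real \<Rightarrow> real \<Rightarrow> real" where
  "f1h \<rho>1 \<rho>2 B dphi phimin h m =
     h powr (-1/2) * exp (- 2 * phimin / h) * lowest_eig \<rho>1 \<rho>2 B dphi h m"

end

theory Submission
  imports Defs
begin

lemma sign_mono:
  fixes F F' :: "real \<Rightarrow> real"
  assumes cont: "continuous_on {a..b} F"
    and der: "\<And>x. x \<in> {a<..<b} \<Longrightarrow> (F has_real_derivative F' x) (at x)"
    and sg: "\<And>x. x \<in> {a<..<b} \<Longrightarrow> (x - r) * F' x \<ge> 0"
    and xy: "a \<le> x" "x \<le> y" "y \<le> b"
  shows "r \<le> x \<Longrightarrow> F x \<le> F y" and "y \<le> r \<Longrightarrow> F y \<le> F x"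
proof -
  assume "r \<le> x"
  show "F x \<le> F y"
  proof (rule DERIV_nonneg_imp_increasing_open[OF xy(2)])
    fix t assume "x < t" "t < y"
    then have t: "t \<in> {a<..<b}" using xy by auto
    have "(t - r) * F' t \<ge> 0" using sg[OF t] .
    moreover have "t - r > 0" using \<open>r \<le> x\<close> \<open>x < t\<close> by simp
    ultimately have "F' t \<ge> 0" by (simp add: zero_le_mult_iff)
    then show "\<exists>y. (F has_real_derivative y) (at t) \<and> 0 \<le> y" using der[OF t] by blast
  next
    show "continuous_on {x..y} F" using cont by (rule continuous_on_subset) (use xy in auto)
  qed
next
  assume "y \<le> r"
  have "(\<lambda>t. - F t) x \<le> (\<lambda>t. - F t) y"
  proof (rule DERIV_nonneg_imp_increasing_open[OF xy(2)])
    fix t assume "x < t" "t < y"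
    then have t: "t \<in> {a<..<b}" using xy by auto
    have "(t - r) * F' t \<ge> 0" using sg[OF t] .
    moreover have "t - r < 0" using \<open>y \<le> r\<close> \<open>t < y\<close> by simp
    ultimately have "- F' t \<ge> 0" by (simp add: mult_le_0_iff zero_le_mult_iff)
    then show "\<exists>z. ((\<lambda>t. - F t) has_real_derivative z) (at t) \<and> 0 \<le> z"
      using DERIV_minus[OF der[OF t]] by blast
  next
    show "continuous_on {x..y} (\<lambda>t. - F t)"
      using cont by (intro continuous_intros) (rule continuous_on_subset, use xy in auto)
  qed
  then show "F y \<le> F x" by simp
qed

lemma sign_mono2:
  fixes F F' :: "real \<Rightarrow> real"
  assumes cont: "continuous_on {a..b} F"
    and der: "\<And>x. x \<in> {a<..<b} \<Longrightarrow> (F has_real_derivative F' x) (at x)"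
    and sg: "\<And>x. x \<in> {a<..<b} \<Longrightarrow> (x - r) * F' x \<ge> 0"
    and r: "r \<in> {a..b}" and x: "x \<in> {a..b}"
  shows "F r \<le> F x"
proof (cases "r \<le> x")
  case True
  then have "F r \<le> F x" using sign_mono(1)[OF cont der sg, of r x] r x by auto
  then show ?thesis .
next
  case False
  then have "F r \<le> F x" using sign_mono(2)[OF cont der sg, of x r] r x by auto
  then show ?thesis .
qed

lemma phi_quad:
  fixes \<rho>1 \<rho>2 rmin :: real and B phi dphi ddphi :: "real \<Rightarrow> real"
  assumes r1: "0 < \<rho>1" and r12: "\<rho>1 < \<rho>2"
   and Bc: "continuous_on {\<rho>1..\<rho>2} B"
   and Bpos: "\<forall>x\<in>{\<rho>1..\<rho>2}. B x > 0"
   and dphi: "\<forall>x\<in>{\<rho>1..\<rho>2}. (phi has_real_derivative dphi x) (at x within {\<rho>1..\<rho>2})"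
   and ddphi: "\<forall>x\<in>{\<rho>1..\<rho>2}. (dphi has_real_derivative ddphi x) (at x within {\<rho>1..\<rho>2})"
   and eq: "\<forall>x\<in>{\<rho>1<..<\<rho>2}. ddphi x + dphi x / x = B x"
   and p1: "phi \<rho>1 = 0" and p2: "phi \<rho>2 = 0"
   and rmin: "rmin \<in> {\<rho>1<..<\<rho>2}"
   and minp: "\<forall>x\<in>{\<rho>1..\<rho>2}. x \<noteq> rmin \<longrightarrow> phi rmin < phi x"
  shows "\<exists>c c'. c > 0 \<and> c' > 0 \<and> (\<forall>x\<in>{\<rho>1..\<rho>2}. phi rmin + c*(x-rmin)^2 \<le> phi x
            \<and> phi x \<le> phi rmin + c'*(x-rmin)^2 \<and> phi x \<le> 0)"
proof -
  define S where "S = {\<rho>1..\<rho>2}"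
  have cS: "compact S" "S \<noteq> {}" using r12 by (auto simp: S_def)
  obtain xm where xm: "xm \<in> S" "\<forall>y\<in>S. B xm \<le> B y"
    using continuous_attains_inf[OF cS Bc[folded S_def]] by blast
  obtain xM where xM: "xM \<in> S" "\<forall>y\<in>S. B y \<le> B xM"
    using continuous_attains_sup[OF cS Bc[folded S_def]] by blast
  define K1 where "K1 = B xm"
  define K2 where "K2 = B xM"
  have K1: "K1 > 0" using Bpos xm unfolding K1_def S_def by auto
  have K2: "K2 > 0" using Bpos xM unfolding K2_def S_def by auto
  have atS: "\<And>x. x \<in> {\<rho>1<..<\<rho>2} \<Longrightarrow> at x within S = at x"
    unfolding S_def by (rule at_within_Icc_at) auto
  have dphi_at: "\<And>x. x \<in> {\<rho>1<..<\<rho>2} \<Longrightarrow> (phi has_real_derivative dphi x) (at x)"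
    using dphi atS unfolding S_def by (metis greaterThanLessThan_iff atLeastAtMost_iff less_imp_le)
  have ddphi_at: "\<And>x. x \<in> {\<rho>1<..<\<rho>2} \<Longrightarrow> (dphi has_real_derivative ddphi x) (at x)"
    using ddphi atS unfolding S_def by (metis greaterThanLessThan_iff atLeastAtMost_iff less_imp_le)
  have cphi: "continuous_on S phi" unfolding S_def using dphi by (intro DERIV_continuous_on) auto
  have cdphi: "continuous_on S dphi" unfolding S_def using ddphi by (intro DERIV_continuous_on) auto
  have d0: "dphi rmin = 0"
  proof (rule DERIV_local_min[OF dphi_at[OF rmin]])
    show "0 < min (rmin - \<rho>1) (\<rho>2 - rmin)" using rmin by auto
    show "\<forall>y. \<bar>rmin - y\<bar> < min (rmin - \<rho>1) (\<rho>2 - rmin) \<longrightarrow> phi rmin \<le> phi y"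
    proof (intro allI impI)
      fix y assume "\<bar>rmin - y\<bar> < min (rmin - \<rho>1) (\<rho>2 - rmin)"
      then have "y \<in> {\<rho>1..\<rho>2}" by auto
      then show "phi rmin \<le> phi y" using minp by (cases "y = rmin") auto
    qed
  qed
  define G where "G K x = x * dphi x - K * x^2 / 2" for K x
  have Gder: "((G K) has_real_derivative x * (B x - K)) (at x)" if x: "x \<in> {\<rho>1<..<\<rho>2}" for K x
  proof -
    have "x > 0" using x r1 by auto
    have "ddphi x + dphi x / x = B x" using eq x by blast
    then have "ddphi x = B x - dphi x / x" by linarith
    then have e: "dphi x + x * ddphi x - K * x = x * (B x - K)" using \<open>x > 0\<close> by (simp add: field_simps)
    show ?thesis unfolding G_def using e
      by (auto intro!: derivative_eq_intros ddphi_at[OF x] simp: algebra_simps)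
  qed
  have cG: "continuous_on S (G K)" for K
    unfolding G_def using cdphi by (intro continuous_intros) auto
  have G1: "(x - rmin) * (G K1 x - G K1 rmin) \<ge> 0" if x: "x \<in> S" for x
  proof -
    have sg: "\<And>t. t \<in> {\<rho>1<..<\<rho>2} \<Longrightarrow> (t - \<rho>1) * (t * (B t - K1)) \<ge> 0"
      using xm(2) r1 unfolding K1_def S_def by (auto intro!: mult_nonneg_nonneg)
    show ?thesis
    proof (cases "rmin \<le> x")
      case True
      have "G K1 rmin \<le> G K1 x"
        by (rule sign_mono(1)[OF cG[unfolded S_def] Gder sg]) (use True x rmin in \<open>auto simp: S_def\<close>)
      then show ?thesis using True by simp
    next
      case False
      have "G K1 x \<le> G K1 rmin"
        by (rule sign_mono(1)[OF cG[unfolded S_def] Gder sg]) (use False x rmin in \<open>auto simp: S_def\<close>)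
      then show ?thesis using False by (simp add: mult_le_0_iff zero_le_mult_iff)
    qed
  qed
  have G2: "(x - rmin) * (G K2 x - G K2 rmin) \<le> 0" if x: "x \<in> S" for x
  proof -
    have sg: "(t - \<rho>1) * (- (t * (B t - K2))) \<ge> 0" if t: "t \<in> {\<rho>1<..<\<rho>2}" for t
    proof -
      have "B t \<le> K2" using xM(2) t unfolding K2_def S_def by auto
      then have "0 \<le> t * (K2 - B t)" using t r1 by auto
      moreover have "0 \<le> t - \<rho>1" using t by auto
      ultimately have "0 \<le> (t - \<rho>1) * (t * (K2 - B t))" by simp
      then show ?thesis by (simp add: algebra_simps)
    qed
    have cG': "continuous_on {\<rho>1..\<rho>2} (\<lambda>x. - G K2 x)" using cG[of K2] unfolding S_def
      by (intro continuous_intros)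
    have Gder': "((\<lambda>x. - G K2 x) has_real_derivative - (t * (B t - K2))) (at t)"
      if "t \<in> {\<rho>1<..<\<rho>2}" for t using DERIV_minus[OF Gder[OF that]] .
    show ?thesis
    proof (cases "rmin \<le> x")
      case True
      have "- G K2 rmin \<le> - G K2 x"
        by (rule sign_mono(1)[OF cG' Gder' sg]) (use True x rmin in \<open>auto simp: S_def\<close>)
      then show ?thesis using True by (simp add: mult_le_0_iff)
    next
      case False
      have "- G K2 x \<le> - G K2 rmin"
        by (rule sign_mono(1)[OF cG' Gder' sg]) (use False x rmin in \<open>auto simp: S_def\<close>)
      then show ?thesis using False by (simp add: mult_le_0_iff zero_le_mult_iff)
    qed
  qed
  define c where "c = K1 * \<rho>1 / \<rho>2 / 2"
  define c' where "c' = K2 * \<rho>2 / \<rho>1 / 2"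
  have c: "c > 0" "c' > 0" using K1 K2 r1 r12 by (auto simp: c_def c'_def)
  have L1: "(x - rmin) * dphi x \<ge> 2 * c * (x - rmin)^2" if x: "x \<in> S" for x
  proof -
    have xp: "x > 0" "\<rho>1 \<le> x" "x \<le> \<rho>2" using x r1 by (auto simp: S_def)
    have "(x - rmin) * (x * dphi x - K1 * (x^2 - rmin^2) / 2) \<ge> 0"
    proof -
      have e: "G K1 x - G K1 rmin = x * dphi x - K1 * (x^2 - rmin^2) / 2"
        using d0 by (simp add: G_def field_simps)
      show ?thesis using G1[OF x] unfolding e .
    qed
    then have "x * ((x - rmin) * dphi x) \<ge> K1 * (x - rmin)^2 * (x + rmin) / 2"
      by (simp add: algebra_simps power2_eq_square)
    moreover have "K1 * (x - rmin)^2 * (x + rmin) / 2 \<ge> K1 * (x - rmin)^2 * \<rho>1"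
    proof -
      have "(x + rmin)/2 \<ge> \<rho>1" using xp rmin by auto
      then have "K1 * (x - rmin)^2 * ((x + rmin)/2) \<ge> K1 * (x - rmin)^2 * \<rho>1"
        using K1 by (intro mult_left_mono) auto
      then show ?thesis by simp
    qed
    ultimately have A: "x * ((x - rmin) * dphi x) \<ge> K1 * (x - rmin)^2 * \<rho>1" by linarith
    have "x * (2 * c * (x - rmin)^2) = (x / \<rho>2) * (K1 * (x - rmin)^2 * \<rho>1)"
      unfolding c_def using r1 r12 by (simp add: field_simps)
    also have "\<dots> \<le> 1 * (K1 * (x - rmin)^2 * \<rho>1)"
      using xp K1 r1 r12 by (intro mult_right_mono) auto
    finally have "x * (2 * c * (x - rmin)^2) \<le> x * ((x - rmin) * dphi x)" using A by linarith
    then show ?thesis using xp by (simp add: mult_le_cancel_left)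
  qed
  have L2: "(x - rmin) * dphi x \<le> 2 * c' * (x - rmin)^2" if x: "x \<in> S" for x
  proof -
    have xp: "x > 0" "\<rho>1 \<le> x" "x \<le> \<rho>2" using x r1 by (auto simp: S_def)
    have "(x - rmin) * (x * dphi x - K2 * (x^2 - rmin^2) / 2) \<le> 0"
    proof -
      have e: "G K2 x - G K2 rmin = x * dphi x - K2 * (x^2 - rmin^2) / 2"
        using d0 by (simp add: G_def field_simps)
      show ?thesis using G2[OF x] unfolding e .
    qed
    then have "x * ((x - rmin) * dphi x) \<le> K2 * (x - rmin)^2 * (x + rmin) / 2"
      by (simp add: algebra_simps power2_eq_square) (simp add: field_simps)
    moreover have "K2 * (x - rmin)^2 * (x + rmin) / 2 \<le> K2 * (x - rmin)^2 * \<rho>2"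
    proof -
      have "(x + rmin)/2 \<le> \<rho>2" using xp rmin by auto
      then have "K2 * (x - rmin)^2 * ((x + rmin)/2) \<le> K2 * (x - rmin)^2 * \<rho>2"
        using K2 by (intro mult_left_mono) auto
      then show ?thesis by simp
    qed
    ultimately have A: "x * ((x - rmin) * dphi x) \<le> K2 * (x - rmin)^2 * \<rho>2" by linarith
    have "1 * (K2 * (x - rmin)^2 * \<rho>2) \<le> (x / \<rho>1) * (K2 * (x - rmin)^2 * \<rho>2)"
      using xp K2 r1 r12 by (intro mult_right_mono) auto
    also have "\<dots> = x * (2 * c' * (x - rmin)^2)"
      unfolding c'_def using r1 r12 by (simp add: field_simps)
    finally have "x * ((x - rmin) * dphi x) \<le> x * (2 * c' * (x - rmin)^2)" using A by linarith
    then show ?thesis using xp by (simp add: mult_le_cancel_left)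
  qed
  have rS: "rmin \<in> {\<rho>1..\<rho>2}" using rmin by auto
  have Q1: "phi rmin + c*(x-rmin)^2 \<le> phi x" if x: "x \<in> S" for x
  proof -
    have der: "((\<lambda>x. phi x - c*(x-rmin)^2) has_real_derivative dphi t - c * (2 * (t - rmin)^1 * 1)) (at t)"
      if "t \<in> {\<rho>1<..<\<rho>2}" for t
      by (auto intro!: derivative_eq_intros dphi_at[OF that])
    have sg: "(t - rmin) * (dphi t - c * (2 * (t - rmin)^1 * 1)) \<ge> 0" if "t \<in> {\<rho>1<..<\<rho>2}" for t
      using L1[of t] that by (auto simp: S_def algebra_simps power2_eq_square)
    have "(\<lambda>x. phi x - c*(x-rmin)^2) rmin \<le> (\<lambda>x. phi x - c*(x-rmin)^2) x"
      by (rule sign_mono2[OF _ der sg rS]) (use cphi x in \<open>auto simp: S_def intro!: continuous_intros\<close>)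
    then show ?thesis by simp
  qed
  have Q2: "phi x \<le> phi rmin + c'*(x-rmin)^2" if x: "x \<in> S" for x
  proof -
    have der: "((\<lambda>x. c'*(x-rmin)^2 - phi x) has_real_derivative c' * (2 * (t - rmin)^1 * 1) - dphi t) (at t)"
      if "t \<in> {\<rho>1<..<\<rho>2}" for t
      by (auto intro!: derivative_eq_intros dphi_at[OF that])
    have sg: "(t - rmin) * (c' * (2 * (t - rmin)^1 * 1) - dphi t) \<ge> 0" if "t \<in> {\<rho>1<..<\<rho>2}" for t
      using L2[of t] that by (auto simp: S_def algebra_simps power2_eq_square)
    have "(\<lambda>x. c'*(x-rmin)^2 - phi x) rmin \<le> (\<lambda>x. c'*(x-rmin)^2 - phi x) x"
      by (rule sign_mono2[OF _ der sg rS]) (use cphi x in \<open>auto simp: S_def intro!: continuous_intros\<close>)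
    then show ?thesis by simp
  qed
  have Q3: "phi x \<le> 0" if x: "x \<in> S" for x
  proof -
    have sg: "(t - rmin) * dphi t \<ge> 0" if "t \<in> {\<rho>1<..<\<rho>2}" for t
    proof -
      have "0 \<le> 2 * c * (t - rmin)^2" using c by simp
      then show ?thesis using L1[of t] that by (auto simp: S_def)
    qed
    show ?thesis
    proof (cases "rmin \<le> x")
      case True
      have "phi x \<le> phi \<rho>2"
        by (rule sign_mono(1)[OF cphi[unfolded S_def] dphi_at sg]) (use True x in \<open>auto simp: S_def\<close>)
      then show ?thesis using p2 by simp
    next
      case False
      have "phi x \<le> phi \<rho>1"
        by (rule sign_mono(2)[OF cphi[unfolded S_def] dphi_at sg]) (use False x in \<open>auto simp: S_def\<close>)
      then show ?thesis using p1 by simp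
    qed
  qed
  show ?thesis using c Q1 Q2 Q3 unfolding S_def by blast
qed

locale rsol =
  fixes \<rho>1 \<rho>2 h m lam :: real and B dphi ddphi a a1 a2 :: "real \<Rightarrow> real"
  assumes r1: "0 < \<rho>1" and r12: "\<rho>1 < \<rho>2" and hpos: "0 < h"
  and ddphi: "\<forall>x\<in>{\<rho>1..\<rho>2}. (dphi has_real_derivative ddphi x) (at x within {\<rho>1..\<rho>2})"
  and eq: "\<forall>x\<in>{\<rho>1<..<\<rho>2}. ddphi x + dphi x / x = B x"
  and ad: "\<forall>x\<in>{\<rho>1..\<rho>2}. (a has_real_derivative a1 x) (at x within {\<rho>1..\<rho>2}) \<and>
                 (a1 has_real_derivative a2 x) (at x within {\<rho>1..\<rho>2})"
  and a0: "a \<rho>1 = 0" "a \<rho>2 = 0"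
  and ode: "\<forall>x\<in>{\<rho>1<..<\<rho>2}. - (h^2) * (a2 x + (1 / (4 * x^2)) * a x)
              + ((h * m / x - dphi x)^2 - h * B x) * a x = lam * a x"
begin

definition "g x = dphi x - h * (m + 1/2) / x"
definition "w x = h * a1 x + g x * a x"

lemma atS: "x \<in> {\<rho>1<..<\<rho>2} \<Longrightarrow> at x within {\<rho>1..\<rho>2} = at x"
  by (rule at_within_Icc_at) auto

lemma ddphi_at: "x \<in> {\<rho>1<..<\<rho>2} \<Longrightarrow> (dphi has_real_derivative ddphi x) (at x)"
  using ddphi atS by (metis greaterThanLessThan_iff atLeastAtMost_iff less_imp_le)
lemma a_at: "x \<in> {\<rho>1<..<\<rho>2} \<Longrightarrow> (a has_real_derivative a1 x) (at x)"
  using ad atS by (metis greaterThanLessThan_iff atLeastAtMost_iff less_imp_le)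
lemma a1_at: "x \<in> {\<rho>1<..<\<rho>2} \<Longrightarrow> (a1 has_real_derivative a2 x) (at x)"
  using ad atS by (metis greaterThanLessThan_iff atLeastAtMost_iff less_imp_le)

lemma cont_dphi: "continuous_on {\<rho>1..\<rho>2} dphi"
  using ddphi by (intro DERIV_continuous_on) auto
lemma cont_a: "continuous_on {\<rho>1..\<rho>2} a"
  using ad by (intro DERIV_continuous_on) auto
lemma cont_a1: "continuous_on {\<rho>1..\<rho>2} a1"
  using ad by (intro DERIV_continuous_on) auto
lemma cont_g: "continuous_on {\<rho>1..\<rho>2} g"
  unfolding g_def using cont_dphi r1 by (intro continuous_intros) auto
lemma cont_w: "continuous_on {\<rho>1..\<rho>2} w"
  unfolding w_def using cont_g cont_a cont_a1 by (intro continuous_intros)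

lemma F_deriv:
  assumes x: "x \<in> {\<rho>1<..<\<rho>2}"
  shows "((\<lambda>x. a x * w x) has_real_derivative ((w x)^2 - lam * (a x)^2) / h) (at x)"
proof -
  have xp: "x > 0" using x r1 by auto
  have D: "((\<lambda>x. a x * w x) has_real_derivative
      a1 x * w x + a x * (h * a2 x + ((ddphi x - h * (m + 1/2) * (- 1 / x^2)) * a x + g x * a1 x))) (at x)"
  proof -
    have dg: "(g has_real_derivative (ddphi x - h * (m + 1/2) * (- 1 / x^2))) (at x)"
      unfolding g_def using xp
      by (auto intro!: derivative_eq_intros ddphi_at[OF x] simp: power2_eq_square field_simps)
    have "(w has_real_derivative h * a2 x + ((ddphi x - h * (m + 1/2) * (- 1 / x^2)) * a x + g x * a1 x)) (at x)"
      unfolding w_def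
      by (auto intro!: derivative_eq_intros a1_at[OF x] a_at[OF x] dg)
    then show ?thesis
      by (auto intro!: derivative_eq_intros a_at[OF x])
  qed
  have o: "- (h^2) * (a2 x + (1 / (4 * x^2)) * a x) + ((h * m / x - dphi x)^2 - h * B x) * a x = lam * a x"
    using ode x by blast
  have b: "ddphi x = B x - dphi x / x" using eq x by (metis add_diff_cancel_right')
  have a2e: "h^2 * a2 x = - (h^2) * (1 / (4 * x^2)) * a x + ((h * m / x - dphi x)^2 - h * B x) * a x - lam * a x"
    using o by (simp add: algebra_simps)
  have "h * (a1 x * w x + a x * (h * a2 x + ((ddphi x - h * (m + 1/2) * (- 1 / x^2)) * a x + g x * a1 x)))
      = (w x)^2 - lam * (a x)^2"
  proof -
    have "h * (a1 x * w x + a x * (h * a2 x + ((ddphi x - h * (m + 1/2) * (- 1 / x^2)) * a x + g x * a1 x)))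
        = h * a1 x * w x + a x * (h^2 * a2 x) + h * (ddphi x - h * (m + 1/2) * (- 1 / x^2)) * (a x)^2
          + g x * a x * (h * a1 x)"
      by (simp add: algebra_simps power2_eq_square)
    also have "\<dots> = (w x)^2 - lam * (a x)^2"
      unfolding a2e b w_def g_def using xp
      by (simp add: field_simps power2_eq_square)
    finally show ?thesis .
  qed
  then have "a1 x * w x + a x * (h * a2 x + ((ddphi x - h * (m + 1/2) * (- 1 / x^2)) * a x + g x * a1 x))
      = ((w x)^2 - lam * (a x)^2) / h"
    using hpos by (simp add: field_simps)
  then show ?thesis using D by simp
qed

lemma energy: "integral {\<rho>1..\<rho>2} (\<lambda>x. (w x)^2) = lam * integral {\<rho>1..\<rho>2} (\<lambda>x. (a x)^2)"
proof -
  have "((\<lambda>x. ((w x)^2 - lam * (a x)^2) / h) has_integral (a \<rho>2 * w \<rho>2 - a \<rho>1 * w \<rho>1)) {\<rho>1..\<rho>2}"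
    by (rule fundamental_theorem_of_calculus_interior)
       (use r12 F_deriv cont_a cont_w in \<open>auto simp: has_real_derivative_iff_has_vector_derivative[symmetric] intro!: continuous_intros\<close>)
  then have "((\<lambda>x. ((w x)^2 - lam * (a x)^2) / h) has_integral 0) {\<rho>1..\<rho>2}" using a0 by simp
  then have "((\<lambda>x. h * (((w x)^2 - lam * (a x)^2) / h)) has_integral h * 0) {\<rho>1..\<rho>2}"
    by (rule has_integral_mult_right)
  then have "((\<lambda>x. (w x)^2 - lam * (a x)^2) has_integral 0) {\<rho>1..\<rho>2}" using hpos by simp
  then have I: "integral {\<rho>1..\<rho>2} (\<lambda>x. (w x)^2 - lam * (a x)^2) = 0" by (rule integral_unique)
  have iw: "(\<lambda>x. (w x)^2) integrable_on {\<rho>1..\<rho>2}"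
    by (rule integrable_continuous_interval) (use cont_w in \<open>intro continuous_intros\<close>)
  have ia: "(\<lambda>x. lam * (a x)^2) integrable_on {\<rho>1..\<rho>2}"
    by (rule integrable_continuous_interval) (use cont_a in \<open>intro continuous_intros\<close>)
  show ?thesis using I integral_diff[OF iw ia] by simp
qed

end

lemma integral_cmult_real: "integral S (\<lambda>x. c * f x) = c * integral S (f :: 'a::euclidean_space \<Rightarrow> real)"
  using integral_cmul[of S c f] by simp

lemma quad_disc:
  fixes I J K :: real
  assumes H: "\<And>t. 0 \<le> t^2 * I + 2 * t * K + J" and I0: "I \<ge> 0"
  shows "K^2 \<le> I * J"
proof (cases "I > 0")
  case True
  have "0 \<le> (-K/I)^2 * I + 2 * (-K/I) * K + J" by (rule H)
  also have "(-K/I)^2 * I = K^2 / I" using True by (simp add: power2_eq_square)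
  also have "2 * (-K/I) * K = - 2 * (K^2 / I)" by (simp add: power2_eq_square)
  finally have "K^2 / I \<le> J" by simp
  then show ?thesis using True by (simp add: pos_divide_le_eq mult.commute)
next
  case False
  have I00: "I = 0" using False I0 by simp
  have "K = 0"
  proof (rule ccontr)
    assume K: "K \<noteq> 0"
    define t where "t = -(\<bar>J\<bar> + 1)/(2*K)"
    have "2 * t * K = -(\<bar>J\<bar> + 1)" using K by (simp add: t_def)
    moreover have "0 \<le> t^2 * I + 2 * t * K + J" by (rule H)
    moreover have "t^2 * I = 0" using I00 by simp
    ultimately show False using abs_ge_self[of J] by linarith
  qed
  then show ?thesis using I00 by simp
qed

lemma CS_int:
  fixes f g :: "real \<Rightarrow> real"
  assumes f: "continuous_on {c..d} f" and g: "continuous_on {c..d} g"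
  shows "(integral {c..d} (\<lambda>x. f x * g x))^2 \<le> integral {c..d} (\<lambda>x. (f x)^2) * integral {c..d} (\<lambda>x. (g x)^2)"
proof (rule quad_disc)
  fix t :: real
  have i1: "(\<lambda>x. t^2 * (f x)^2) integrable_on {c..d}"
    by (rule integrable_continuous_interval) (use f in \<open>intro continuous_intros\<close>)
  have i2: "(\<lambda>x. 2 * t * (f x * g x)) integrable_on {c..d}"
    by (rule integrable_continuous_interval) (use f g in \<open>intro continuous_intros\<close>)
  have i3: "(\<lambda>x. (g x)^2) integrable_on {c..d}"
    by (rule integrable_continuous_interval) (use g in \<open>intro continuous_intros\<close>)
  have i12: "(\<lambda>x. t^2 * (f x)^2 + 2 * t * (f x * g x)) integrable_on {c..d}"
    using i1 i2 by (rule integrable_add)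
  have ic: "(\<lambda>x. (t * f x + g x)^2) integrable_on {c..d}"
    by (rule integrable_continuous_interval) (use f g in \<open>intro continuous_intros\<close>)
  have pw: "\<And>x. (t * f x + g x)^2 = (t^2 * (f x)^2 + 2 * t * (f x * g x)) + (g x)^2"
    by (simp add: power2_eq_square algebra_simps)
  have "0 \<le> integral {c..d} (\<lambda>x. (t * f x + g x)^2)"
    by (rule integral_nonneg[OF ic]) simp
  also have "integral {c..d} (\<lambda>x. (t * f x + g x)^2)
      = integral {c..d} (\<lambda>x. (t^2 * (f x)^2 + 2 * t * (f x * g x)) + (g x)^2)"
    by (simp only: pw)
  also have "\<dots> = t^2 * integral {c..d} (\<lambda>x. (f x)^2) + 2 * t * integral {c..d} (\<lambda>x. f x * g x)
      + integral {c..d} (\<lambda>x. (g x)^2)"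
  proof -
    have e1: "integral {c..d} (\<lambda>x. (t^2 * (f x)^2 + 2 * t * (f x * g x)) + (g x)^2)
      = integral {c..d} (\<lambda>x. t^2 * (f x)^2 + 2 * t * (f x * g x)) + integral {c..d} (\<lambda>x. (g x)^2)"
      by (rule integral_add[OF i12 i3])
    have e2: "integral {c..d} (\<lambda>x. t^2 * (f x)^2 + 2 * t * (f x * g x))
      = integral {c..d} (\<lambda>x. t^2 * (f x)^2) + integral {c..d} (\<lambda>x. 2 * t * (f x * g x))"
      by (rule integral_add[OF i1 i2])
    have e3: "integral {c..d} (\<lambda>x. t^2 * (f x)^2) = t^2 * integral {c..d} (\<lambda>x. (f x)^2)"
      by (rule integral_cmult_real)
    have e4: "integral {c..d} (\<lambda>x. 2 * t * (f x * g x)) = 2 * t * integral {c..d} (\<lambda>x. f x * g x)"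
      by (rule integral_cmult_real)
    show ?thesis by (simp only: e1 e2 e3 e4)
  qed
  finally show "0 \<le> t^2 * integral {c..d} (\<lambda>x. (f x)^2) + 2 * t * integral {c..d} (\<lambda>x. f x * g x)
      + integral {c..d} (\<lambda>x. (g x)^2)" .
next
  have ic: "(\<lambda>x. (f x)^2) integrable_on {c..d}"
    by (rule integrable_continuous_interval) (use f in \<open>intro continuous_intros\<close>)
  show "0 \<le> integral {c..d} (\<lambda>x. (f x)^2)"
    by (rule integral_nonneg[OF ic]) simp
qed

context rsol begin

lemma hne [simp]: "h \<noteq> 0" using hpos by simp

lemma pointwise:
  fixes phi :: "real \<Rightarrow> real"
  assumes dphi: "\<forall>x\<in>{\<rho>1..\<rho>2}. (phi has_real_derivative dphi x) (at x within {\<rho>1..\<rho>2})"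
    and neg: "\<forall>x\<in>{\<rho>1..\<rho>2}. phi x \<le> 0"
    and x: "x \<in> {\<rho>1..\<rho>2}"
  shows "(a x)^2 \<le> (\<rho>2 - \<rho>1) * exp (-2 * phi x / h) * integral {\<rho>1..\<rho>2} (\<lambda>s. (w s / h)^2)"
proof -
  define q where "q = - (m + 1/2)"
  define e where "e s = exp (phi s / h) * s powr q" for s
  define u where "u s = e s * a s" for s
  define W where "W = integral {\<rho>1..\<rho>2} (\<lambda>s. (w s / h)^2)"
  have cphi: "continuous_on {\<rho>1..\<rho>2} phi" using dphi by (intro DERIV_continuous_on) auto
  have ce: "continuous_on {\<rho>1..\<rho>2} e" unfolding e_def using cphi r1 hpos
    by (intro continuous_intros) auto
  have cu: "continuous_on {\<rho>1..\<rho>2} u" unfolding u_def using ce cont_a by (intro continuous_intros)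
  have cwh: "continuous_on {\<rho>1..\<rho>2} (\<lambda>s. w s / h)" using cont_w hpos by (intro continuous_intros) auto
  have phi_at: "(phi has_real_derivative dphi s) (at s)" if s: "s \<in> {\<rho>1<..<\<rho>2}" for s
    using dphi atS[OF s] s by (metis greaterThanLessThan_iff atLeastAtMost_iff less_imp_le)
  have uder: "(u has_real_derivative e s * (w s / h)) (at s)" if s: "s \<in> {\<rho>1<..<\<rho>2}" for s
  proof -
    have sp: "s > 0" using s r1 by auto
    have d1: "((\<lambda>s. exp (phi s / h)) has_real_derivative exp (phi s / h) * (dphi s / h)) (at s)"
      by (auto intro!: derivative_eq_intros phi_at[OF s])
    have "s powr (q - 1) = s powr q / s" using sp by (simp add: powr_diff)
    then have d2: "((\<lambda>s. s powr q) has_real_derivative q * (s powr q / s)) (at s)"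
      using has_real_derivative_powr[OF sp, of q] by simp
    note D = DERIV_mult[OF DERIV_mult[OF d1 d2] a_at[OF s]]
    show ?thesis unfolding u_def e_def
      by (rule DERIV_cong[OF D]) (use sp in \<open>simp add: e_def w_def g_def q_def field_simps\<close>)
  qed
  have seg: "(u d - u c)^2 \<le> integral {c..d} (\<lambda>s. (e s)^2) * W"
    if cd: "\<rho>1 \<le> c" "c \<le> d" "d \<le> \<rho>2" for c d
  proof -
    have sub: "{c..d} \<subseteq> {\<rho>1..\<rho>2}" using cd by auto
    have "((\<lambda>s. e s * (w s / h)) has_integral (u d - u c)) {c..d}"
      by (rule fundamental_theorem_of_calculus_interior)
         (use cd uder continuous_on_subset[OF cu sub] in \<open>auto simp: has_real_derivative_iff_has_vector_derivative[symmetric]\<close>)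
    then have I: "integral {c..d} (\<lambda>s. e s * (w s / h)) = u d - u c" by (rule integral_unique)
    have "(u d - u c)^2 \<le> integral {c..d} (\<lambda>s. (e s)^2) * integral {c..d} (\<lambda>s. (w s / h)^2)"
      unfolding I[symmetric] by (rule CS_int) (use continuous_on_subset[OF ce sub] continuous_on_subset[OF cwh sub] in auto)
    also have "integral {c..d} (\<lambda>s. (w s / h)^2) \<le> W"
      unfolding W_def
      by (rule integral_subset_le[OF sub])
         (auto intro!: integrable_continuous_interval continuous_intros continuous_on_subset[OF cwh sub] cwh)
    then have "integral {c..d} (\<lambda>s. (e s)^2) * integral {c..d} (\<lambda>s. (w s / h)^2) \<le> integral {c..d} (\<lambda>s. (e s)^2) * W"
      by (rule mult_left_mono)
         (rule integral_nonneg, auto intro!: integrable_continuous_interval continuous_intros continuous_on_subset[OF ce sub])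
    finally show ?thesis .
  qed
  have ebound: "integral {c..d} (\<lambda>s. (e s)^2) \<le> (\<rho>2 - \<rho>1) * (x powr q)^2"
    if cd: "\<rho>1 \<le> c" "c \<le> d" "d \<le> \<rho>2" and eb: "\<And>s. s \<in> {c..d} \<Longrightarrow> e s \<le> x powr q" for c d
  proof -
    have sub: "{c..d} \<subseteq> {\<rho>1..\<rho>2}" using cd by auto
    have "integral {c..d} (\<lambda>s. (e s)^2) \<le> integral {c..d} (\<lambda>s. (x powr q)^2)"
    proof (rule integral_le)
      show "(\<lambda>s. (e s)^2) integrable_on {c..d}"
        by (auto intro!: integrable_continuous_interval continuous_intros continuous_on_subset[OF ce sub])
      show "(\<lambda>s. (x powr q)^2) integrable_on {c..d}" by (rule integrable_const_ivl)
      fix s assume s: "s \<in> {c..d}"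
      have "0 \<le> e s" unfolding e_def by simp
      then show "(e s)^2 \<le> (x powr q)^2" using eb[OF s] by (simp add: power_mono)
    qed
    also have "\<dots> = (d - c) * (x powr q)^2" using cd by simp
    also have "\<dots> \<le> (\<rho>2 - \<rho>1) * (x powr q)^2" using cd by (intro mult_right_mono) auto
    finally show ?thesis .
  qed
  have xp: "x > 0" using x r1 by auto
  have key: "(u x)^2 \<le> (\<rho>2 - \<rho>1) * (x powr q)^2 * W"
  proof (cases "q \<le> 0")
    case True
    have eb: "e s \<le> x powr q" if s: "s \<in> {x..\<rho>2}" for s
    proof -
      have "exp (phi s / h) \<le> 1" using neg s x hpos by (auto simp: divide_nonpos_pos)
      moreover have "s powr q \<le> x powr q" using powr_mono2'[OF True xp] s by auto
      ultimately show ?thesis unfolding e_def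
        using mult_right_mono[of "exp (phi s / h)" 1 "s powr q"] by simp
    qed
    have "(u \<rho>2 - u x)^2 \<le> integral {x..\<rho>2} (\<lambda>s. (e s)^2) * W"
      by (rule seg) (use x in auto)
    also have "\<dots> \<le> (\<rho>2 - \<rho>1) * (x powr q)^2 * W"
      by (rule mult_right_mono[OF ebound]) (use x eb in \<open>auto simp: W_def intro!: integral_nonneg integrable_continuous_interval continuous_intros cwh\<close>)
    finally show ?thesis using a0 by (simp add: u_def power2_eq_square)
  next
    case False
    have eb: "e s \<le> x powr q" if s: "s \<in> {\<rho>1..x}" for s
    proof -
      have "exp (phi s / h) \<le> 1" using neg s x hpos by (auto simp: divide_nonpos_pos)
      moreover have "s powr q \<le> x powr q" using powr_mono2[of q s x] False s r1 by auto
      ultimately show ?thesis unfolding e_def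
        using mult_right_mono[of "exp (phi s / h)" 1 "s powr q"] by simp
    qed
    have "(u x - u \<rho>1)^2 \<le> integral {\<rho>1..x} (\<lambda>s. (e s)^2) * W"
      by (rule seg) (use x in auto)
    also have "\<dots> \<le> (\<rho>2 - \<rho>1) * (x powr q)^2 * W"
      by (rule mult_right_mono[OF ebound]) (use x eb in \<open>auto simp: W_def intro!: integral_nonneg integrable_continuous_interval continuous_intros cwh\<close>)
    finally show ?thesis using a0 by (simp add: u_def)
  qed
  have "(u x)^2 = (x powr q)^2 * (exp (phi x / h)^2 * (a x)^2)"
    by (simp add: u_def e_def power_mult_distrib)
  then have "(x powr q)^2 * (exp (phi x / h)^2 * (a x)^2) \<le> (x powr q)^2 * ((\<rho>2 - \<rho>1) * W)"
    using key by (simp add: algebra_simps)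
  then have "exp (phi x / h)^2 * (a x)^2 \<le> (\<rho>2 - \<rho>1) * W"
    using xp by (simp add: mult_le_cancel_left)
  then have "exp (-2 * phi x / h) * (exp (phi x / h)^2 * (a x)^2) \<le> exp (-2 * phi x / h) * ((\<rho>2 - \<rho>1) * W)"
    by (rule mult_left_mono) simp
  moreover have "exp (-2 * phi x / h) * exp (phi x / h)^2 = 1"
    by (simp add: power2_eq_square exp_add[symmetric])
  ultimately show ?thesis unfolding W_def by (simp add: algebra_simps)
qed

end

lemma exp_ge_pow:
  fixes x :: real assumes "0 \<le> x"
  shows "x ^ k / fact k \<le> exp x"
proof -
  have s: "summable (\<lambda>n. x^n /\<^sub>R fact n)" using exp_converges[of x] by (rule sums_summable)
  have "exp x = (\<Sum>n. x^n /\<^sub>R fact n)" using exp_converges[of x] by (rule sums_unique)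
  moreover have "sum (\<lambda>n. x^n /\<^sub>R fact n) {k} \<le> (\<Sum>n. x^n /\<^sub>R fact n)"
    by (rule sum_le_suminf[OF s]) (use assms in auto)
  ultimately show ?thesis by (simp add: divide_inverse mult.commute)
qed

lemma asym:
  fixes \<alpha> \<kappa> L :: real and N :: nat
  assumes a0: "0 < \<alpha>" and a1: "\<alpha> < 1/2" and k0: "\<kappa> > 0"
  shows "\<exists>h1>0. \<forall>h. 0 < h \<and> h \<le> h1 \<longrightarrow> L^2 * exp (-2 * \<kappa> * ((h powr \<alpha>)^2 / h)) \<le> h^N * h powr (3/2)"
proof -
  define \<beta> where "\<beta> = 1 - 2 * \<alpha>"
  have bp: "\<beta> > 0" using a1 by (simp add: \<beta>_def)
  define k where "k = nat \<lceil>(N + 5/2) / \<beta>\<rceil>"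
  have kb: "real k * \<beta> \<ge> N + 5/2"
  proof -
    have "real k \<ge> (N + 5/2) / \<beta>" unfolding k_def by linarith
    then show ?thesis using bp by (simp add: field_simps)
  qed
  define K0 where "K0 = L^2 * fact k / (2 * \<kappa>)^k + 1"
  have K0: "K0 > 0" unfolding K0_def using k0 by (intro add_nonneg_pos) auto
  show ?thesis
  proof (intro exI[of _ "min 1 (1 / K0)"] conjI allI impI)
    show "0 < min 1 (1 / K0)" using K0 by simp
    fix h :: real assume h: "0 < h \<and> h \<le> min 1 (1 / K0)"
    then have hp: "h > 0" and h1: "h \<le> 1" and hK: "h * K0 \<le> 1" using K0 by (auto simp: field_simps)
    define \<tau> where "\<tau> = (h powr \<alpha>)^2 / h"
    have \<tau>: "\<tau> = h powr (- \<beta>)"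
    proof -
      have "(h powr \<alpha>)^2 = h powr (2 * \<alpha>)" using hp by (simp add: powr_power mult.commute)
      then have "\<tau> = h powr (2 * \<alpha>) / h powr 1" using hp by (simp add: \<tau>_def)
      also have "\<dots> = h powr (2 * \<alpha> - 1)" by (simp add: powr_diff)
      finally show ?thesis by (simp add: \<beta>_def)
    qed
    have tp: "\<tau> > 0" using hp by (simp add: \<tau>)
    have "(2 * \<kappa> * \<tau>)^k / fact k \<le> exp (2 * \<kappa> * \<tau>)"
      by (rule exp_ge_pow) (use k0 tp in simp)
    then have e1: "exp (- (2 * \<kappa> * \<tau>)) \<le> fact k / (2 * \<kappa> * \<tau>)^k"
      using k0 tp by (simp add: exp_minus field_simps)
    have "\<tau>^k = h powr (- \<beta> * real k)" using hp by (simp add: \<tau> powr_power mult.commute)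
    then have tk: "1 / \<tau>^k = h powr (\<beta> * real k)" by (simp add: powr_minus divide_inverse)
    have "h powr (\<beta> * real k) \<le> h powr (N + 5/2)"
      by (rule powr_mono') (use kb hp h1 in \<open>auto simp: mult.commute\<close>)
    also have "h powr (N + 5/2) = h^N * h powr (3/2) * h"
    proof -
      have "real N + 5/2 = real N + 3/2 + 1" by simp
      then have "h powr (N + 5/2) = h powr (real N) * h powr (3/2) * h powr 1"
        by (simp only: powr_add)
      then show ?thesis using hp by (simp add: powr_realpow)
    qed
    finally have hb: "1 / \<tau>^k \<le> h^N * h powr (3/2) * h" by (simp add: tk)
    have "L^2 * exp (-2 * \<kappa> * \<tau>) \<le> L^2 * (fact k / (2 * \<kappa> * \<tau>)^k)"
      using e1 by (intro mult_left_mono) auto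
    also have "\<dots> = (L^2 * fact k / (2 * \<kappa>)^k) * (1 / \<tau>^k)"
      by (simp add: power_mult_distrib field_simps)
    also have "\<dots> \<le> K0 * (h^N * h powr (3/2) * h)"
      using hb K0 unfolding K0_def by (intro mult_mono) (use tp k0 in \<open>auto simp: less_imp_le\<close>)
    also have "\<dots> = (h * K0) * (h^N * h powr (3/2))" by simp
    also have "\<dots> \<le> 1 * (h^N * h powr (3/2))"
      using hK hp by (intro mult_right_mono) auto
    finally show "L^2 * exp (-2 * \<kappa> * ((h powr \<alpha>)^2 / h)) \<le> h^N * h powr (3/2)"
      by (simp add: \<tau>_def)
  qed
qed

lemma int_le_const:
  fixes f :: "real \<Rightarrow> real"
  assumes "continuous_on {a..b} f" "a \<le> b" "\<And>x. x \<in> {a..b} \<Longrightarrow> f x \<le> K"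
  shows "integral {a..b} f \<le> (b - a) * K"
proof -
  have "integral {a..b} f \<le> integral {a..b} (\<lambda>x. K)"
    by (rule integral_le) (use assms in \<open>auto intro: integrable_continuous_interval\<close>)
  then show ?thesis using assms by simp
qed

lemma out_bound:
  fixes f :: "real \<Rightarrow> real"
  assumes cont: "continuous_on {p..q} f" and pr: "p \<le> r - t" and rq: "r + t \<le> q" and t: "0 \<le> t"
    and fb: "\<And>x. x \<in> {p..q} \<Longrightarrow> t^2 \<le> (x - r)^2 \<Longrightarrow> f x \<le> K" and K: "0 \<le> K"
  shows "integral {p..q} f - integral {r-t..r+t} f \<le> (q - p) * K"
proof -
  have int: "f integrable_on {p..q}" using cont by (rule integrable_continuous_interval)
  have i1: "integral {p..r-t} f + integral {r-t..q} f = integral {p..q} f"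
    by (rule Henstock_Kurzweil_Integration.integral_combine) (use pr rq t int in auto)
  have int2: "f integrable_on {r-t..q}" by (rule integrable_subinterval_real[OF int]) (use pr in auto)
  have i2: "integral {r-t..r+t} f + integral {r+t..q} f = integral {r-t..q} f"
    by (rule Henstock_Kurzweil_Integration.integral_combine) (use pr rq t int2 in auto)
  have b1: "integral {p..r-t} f \<le> (r - t - p) * K"
  proof (rule int_le_const)
    show "continuous_on {p..r - t} f" by (rule continuous_on_subset[OF cont]) (use rq t in auto)
    show "p \<le> r - t" by fact
    fix x assume x: "x \<in> {p..r-t}"
    have "t \<le> r - x" using x by auto
    then have "t^2 \<le> (r - x)^2" using t by (intro power_mono) auto
    then have "t^2 \<le> (x - r)^2" by (simp add: power2_commute)
    then show "f x \<le> K" using x rq t by (intro fb) auto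
  qed
  have b3: "integral {r+t..q} f \<le> (q - (r + t)) * K"
  proof (rule int_le_const)
    show "continuous_on {r+t..q} f" by (rule continuous_on_subset[OF cont]) (use pr t in auto)
    show "r + t \<le> q" by fact
    fix x assume x: "x \<in> {r+t..q}"
    have "t \<le> x - r" using x by auto
    then have "t^2 \<le> (x - r)^2" using t by (intro power_mono) auto
    then show "f x \<le> K" using x pr t by (intro fb) auto
  qed
  have "integral {p..q} f - integral {r-t..r+t} f = integral {p..r-t} f + integral {r+t..q} f"
    using i1 i2 by linarith
  also have "\<dots> \<le> (r - t - p) * K + (q - (r + t)) * K" using b1 b3 by linarith
  also have "\<dots> \<le> (q - p) * K" using t K by (simp add: algebra_simps)
  finally show ?thesis .
qed

lemma core:
  fixes \<rho>1 \<rho>2 rmin \<alpha> c c' \<eta> h m lam :: real and B phi dphi ddphi :: "real \<Rightarrow> real" and N :: nat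
    and v :: "real \<Rightarrow> complex"
  assumes r1: "0 < \<rho>1" and r12: "\<rho>1 < \<rho>2"
    and dphi: "\<forall>x\<in>{\<rho>1..\<rho>2}. (phi has_real_derivative dphi x) (at x within {\<rho>1..\<rho>2})"
    and ddphi: "\<forall>x\<in>{\<rho>1..\<rho>2}. (dphi has_real_derivative ddphi x) (at x within {\<rho>1..\<rho>2})"
    and eq: "\<forall>x\<in>{\<rho>1<..<\<rho>2}. ddphi x + dphi x / x = B x"
    and quad: "\<forall>x\<in>{\<rho>1..\<rho>2}. phi rmin + c*(x-rmin)^2 \<le> phi x
            \<and> phi x \<le> phi rmin + c'*(x-rmin)^2 \<and> phi x \<le> 0"
    and c: "c > 0" and c': "c' > 0" and \<eta>0: "\<eta> > 0" and \<eta>1: "\<eta> \<le> 1" and \<eta>c: "c' * \<eta>^2 \<le> c"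
    and hp: "h > 0" and sd: "h powr \<alpha> \<le> min (rmin - \<rho>1) (\<rho>2 - rmin)"
    and asy: "(\<rho>2 - \<rho>1)^2 * exp (-2 * (c * \<eta>^2) * ((h powr \<alpha>)^2 / h)) \<le> h^N * h powr (3/2)"
    and eig: "is_eigenpair \<rho>1 \<rho>2 B dphi h m lam v"
  shows "0 < wmass phi h v \<rho>1 \<rho>2 \<and>
         continuous_on {\<rho>1..\<rho>2} (\<lambda>r. exp (- 2 * phi r / h) * (cmod (v r))^2) \<and>
         1 - wmass phi h v (rmin - h powr \<alpha>) (rmin + h powr \<alpha>) / wmass phi h v \<rho>1 \<rho>2
           \<le> 2 * h^N * (h powr (-1/2) * exp (- 2 * phi rmin / h) * lam)"
proof -
  define S where "S = {\<rho>1..\<rho>2}"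
  define L where "L = \<rho>2 - \<rho>1"
  have Lp: "L > 0" using r12 by (simp add: L_def)
  obtain v1 v2 where vd: "\<forall>x\<in>{\<rho>1..\<rho>2}. (v has_vector_derivative v1 x) (at x within {\<rho>1..\<rho>2}) \<and>
                         (v1 has_vector_derivative v2 x) (at x within {\<rho>1..\<rho>2})"
    and v0: "v \<rho>1 = 0" "v \<rho>2 = 0" and vnz: "\<exists>x\<in>{\<rho>1..\<rho>2}. v x \<noteq> 0"
    and ode: "\<forall>x\<in>{\<rho>1<..<\<rho>2}.
           - (h^2) *\<^sub>R (v2 x + (1 / (4 * x^2)) *\<^sub>R v x)
           + ((h * m / x - dphi x)^2 - h * B x) *\<^sub>R v x = lam *\<^sub>R v x"
    using eig unfolding is_eigenpair_def by blast
  have odeRe: "\<forall>x\<in>{\<rho>1<..<\<rho>2}. - (h^2) * (Re (v2 x) + (1 / (4 * x^2)) * Re (v x))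
              + ((h * m / x - dphi x)^2 - h * B x) * Re (v x) = lam * Re (v x)"
  proof
    fix x assume "x \<in> {\<rho>1<..<\<rho>2}"
    then have "Re (- (h^2) *\<^sub>R (v2 x + (1 / (4 * x^2)) *\<^sub>R v x)
           + ((h * m / x - dphi x)^2 - h * B x) *\<^sub>R v x) = Re (lam *\<^sub>R v x)" using ode by simp
    then show "- (h^2) * (Re (v2 x) + (1 / (4 * x^2)) * Re (v x))
              + ((h * m / x - dphi x)^2 - h * B x) * Re (v x) = lam * Re (v x)" by simp
  qed
  have odeIm: "\<forall>x\<in>{\<rho>1<..<\<rho>2}. - (h^2) * (Im (v2 x) + (1 / (4 * x^2)) * Im (v x))
              + ((h * m / x - dphi x)^2 - h * B x) * Im (v x) = lam * Im (v x)"
  proof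
    fix x assume "x \<in> {\<rho>1<..<\<rho>2}"
    then have "Im (- (h^2) *\<^sub>R (v2 x + (1 / (4 * x^2)) *\<^sub>R v x)
           + ((h * m / x - dphi x)^2 - h * B x) *\<^sub>R v x) = Im (lam *\<^sub>R v x)" using ode by simp
    then show "- (h^2) * (Im (v2 x) + (1 / (4 * x^2)) * Im (v x))
              + ((h * m / x - dphi x)^2 - h * B x) * Im (v x) = lam * Im (v x)" by simp
  qed
  have adRe: "\<forall>x\<in>{\<rho>1..\<rho>2}. ((\<lambda>x. Re (v x)) has_real_derivative Re (v1 x)) (at x within {\<rho>1..\<rho>2}) \<and>
                 ((\<lambda>x. Re (v1 x)) has_real_derivative Re (v2 x)) (at x within {\<rho>1..\<rho>2})"
    using vd by (auto intro: has_field_derivative_Re)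
  have adIm: "\<forall>x\<in>{\<rho>1..\<rho>2}. ((\<lambda>x. Im (v x)) has_real_derivative Im (v1 x)) (at x within {\<rho>1..\<rho>2}) \<and>
                 ((\<lambda>x. Im (v1 x)) has_real_derivative Im (v2 x)) (at x within {\<rho>1..\<rho>2})"
    using vd by (auto intro: has_field_derivative_Im)
  interpret ra: rsol \<rho>1 \<rho>2 h m lam B dphi ddphi "\<lambda>x. Re (v x)" "\<lambda>x. Re (v1 x)" "\<lambda>x. Re (v2 x)"
    by unfold_locales (use r1 r12 hp ddphi eq adRe v0 odeRe in auto)
  interpret ib: rsol \<rho>1 \<rho>2 h m lam B dphi ddphi "\<lambda>x. Im (v x)" "\<lambda>x. Im (v1 x)" "\<lambda>x. Im (v2 x)"
    by unfold_locales (use r1 r12 hp ddphi eq adIm v0 odeIm in auto)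

  have cG0: "continuous_on S (\<lambda>r. (Re (v r))^2 + (Im (v r))^2)"
    unfolding S_def using ra.cont_a ib.cont_a by (rule continuous_on_add[OF continuous_on_power continuous_on_power])
  define G where "G r = (cmod (v r))^2" for r
  have Geq: "G r = (Re (v r))^2 + (Im (v r))^2" for r by (simp add: G_def cmod_power2)
  have GeqF: "G = (\<lambda>r. (Re (v r))^2 + (Im (v r))^2)" by (simp add: fun_eq_iff Geq)
  have cG: "continuous_on S G" using cG0 by (simp add: GeqF)
  have G0: "G r \<ge> 0" for r by (simp add: G_def)
  have cphi: "continuous_on S phi" unfolding S_def using dphi by (intro DERIV_continuous_on) auto
  define F where "F r = exp (- 2 * phi r / h) * G r" for r
  have cF: "continuous_on S F" unfolding F_def using cphi cG hp by (intro continuous_intros) auto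
  have F0: "F r \<ge> 0" for r by (simp add: F_def G0)
  have wm: "wmass phi h v a b = integral {a..b} F" for a b
    unfolding wmass_def F_def G_def by (rule refl)
  have phineg: "\<forall>x\<in>{\<rho>1..\<rho>2}. phi x \<le> 0" using quad by blast
  define Aa where "Aa = integral S (\<lambda>x. (Re (v x))^2)"
  define Ab where "Ab = integral S (\<lambda>x. (Im (v x))^2)"
  define A where "A = integral S G"
  have AAA: "A = Aa + Ab"
  proof -
    have "A = integral S (\<lambda>x. (Re (v x))^2 + (Im (v x))^2)" unfolding A_def GeqF ..
    also have "\<dots> = Aa + Ab" unfolding Aa_def Ab_def S_def
      by (rule integral_add; rule integrable_continuous_interval; rule continuous_on_power)
         (use ra.cont_a ib.cont_a in auto)
    finally show ?thesis .
  qed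
  have wa: "integral S (\<lambda>s. (ra.w s / h)^2) = lam * Aa / h^2"
  proof -
    have "integral S (\<lambda>s. (ra.w s / h)^2) = integral S (\<lambda>s. (1 / h^2) * (ra.w s)^2)"
      by (simp add: power_divide)
    also have "\<dots> = (1 / h^2) * integral S (\<lambda>s. (ra.w s)^2)" by (rule integral_cmult_real)
    also have "\<dots> = lam * Aa / h^2" using ra.energy unfolding S_def Aa_def by simp
    finally show ?thesis .
  qed
  have wb: "integral S (\<lambda>s. (ib.w s / h)^2) = lam * Ab / h^2"
  proof -
    have "integral S (\<lambda>s. (ib.w s / h)^2) = integral S (\<lambda>s. (1 / h^2) * (ib.w s)^2)"
      by (simp add: power_divide)
    also have "\<dots> = (1 / h^2) * integral S (\<lambda>s. (ib.w s)^2)" by (rule integral_cmult_real)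
    also have "\<dots> = lam * Ab / h^2" using ib.energy unfolding S_def Ab_def by simp
    finally show ?thesis .
  qed
  have laa: "lam * Aa \<ge> 0"
  proof -
    have "0 \<le> integral S (\<lambda>s. (ra.w s)^2)" unfolding S_def
      by (rule integral_nonneg) (auto intro!: integrable_continuous_interval continuous_intros ra.cont_w)
    then show ?thesis using ra.energy unfolding S_def Aa_def by simp
  qed
  have lab: "lam * Ab \<ge> 0"
  proof -
    have "0 \<le> integral S (\<lambda>s. (ib.w s)^2)" unfolding S_def
      by (rule integral_nonneg) (auto intro!: integrable_continuous_interval continuous_intros ib.cont_w)
    then show ?thesis using ib.energy unfolding S_def Ab_def by simp
  qed
  have lA: "lam * A \<ge> 0" using laa lab AAA by (simp add: algebra_simps)
  define Kb where "Kb = L * (lam * A) / h^2"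
  have Kb0: "Kb \<ge> 0" unfolding Kb_def using Lp lA by simp
  have pw: "G x \<le> Kb * exp (- 2 * phi x / h)" if x: "x \<in> S" for x
  proof -
    have xa: "(Re (v x))^2 \<le> L * exp (-2 * phi x / h) * (lam * Aa / h^2)"
      using ra.pointwise[OF dphi phineg, of x] x wa unfolding S_def L_def by simp
    have xb: "(Im (v x))^2 \<le> L * exp (-2 * phi x / h) * (lam * Ab / h^2)"
      using ib.pointwise[OF dphi phineg, of x] x wb unfolding S_def L_def by simp
    have "G x \<le> L * exp (-2 * phi x / h) * (lam * Aa / h^2) + L * exp (-2 * phi x / h) * (lam * Ab / h^2)"
      using xa xb Geq by simp
    also have "\<dots> = Kb * exp (- 2 * phi x / h)" unfolding Kb_def AAA by (simp add: field_simps)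
    finally show ?thesis .
  qed
  have Apos: "A > 0"
  proof -
    have iG: "G integrable_on S" using cG unfolding S_def by (rule integrable_continuous_interval)
    have A0: "A \<ge> 0" unfolding A_def by (rule integral_nonneg[OF iG]) (simp add: G0)
    have "A \<noteq> 0"
    proof
      assume "A = 0"
      then have "integral (cbox \<rho>1 \<rho>2) G = 0" by (simp add: A_def S_def cbox_interval)
      moreover have "box \<rho>1 \<rho>2 \<noteq> {}" using r12 by (simp add: box_real)
      ultimately have "\<forall>x\<in>cbox \<rho>1 \<rho>2. G x = 0"
        using integral_cbox_eq_0_iff[of \<rho>1 \<rho>2 G] cG G0 unfolding S_def by (simp add: cbox_interval)
      then show False using vnz by (auto simp: G_def cbox_interval)
    qed
    then show ?thesis using A0 by simp
  qed
  have lam0: "lam \<ge> 0" using lA Apos by (simp add: zero_le_mult_iff)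

  define pm where "pm = phi rmin"
  define sh where "sh = h powr \<alpha>"
  have shp: "sh > 0" using hp by (simp add: sh_def)
  have sd1: "\<rho>1 \<le> rmin - sh" "rmin + sh \<le> \<rho>2" using sd by (auto simp: sh_def)
  define \<tau> where "\<tau> = sh^2 / h"
  have \<tau>0: "\<tau> \<ge> 0" using hp by (simp add: \<tau>_def)
  define X where "X = exp (- 2 * pm / h)"
  define Y where "Y = exp (- 2 * c * \<tau>)"
  define Z where "Z = exp (- 2 * (c * \<eta>^2) * \<tau>)"
  have X0: "X > 0" "Y > 0" "Z > 0" by (auto simp: X_def Y_def Z_def)
  have \<eta>2: "\<eta>^2 \<le> 1" using \<eta>0 \<eta>1 by (simp add: power_le_one)
  have YZ: "Y \<le> Z"
  proof -
    have "\<eta>^2 * \<tau> \<le> 1 * \<tau>" using \<eta>2 \<tau>0 by (intro mult_right_mono) auto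
    then have "c * (\<eta>^2 * \<tau>) \<le> c * \<tau>" using c by simp
    then have "c * \<eta>^2 * \<tau> \<le> c * \<tau>" by (simp add: mult.assoc)
    then show ?thesis unfolding Y_def Z_def by simp
  qed
  have xin: "x \<in> S" if "x \<in> {\<rho>1..\<rho>2}" for x using that by (simp add: S_def)
  have E1: "integral S F - integral {rmin - sh..rmin + sh} F \<le> L * (Kb * (X^2 * Y^2))"
    unfolding S_def L_def
  proof (rule out_bound[OF cF[unfolded S_def] sd1 less_imp_le[OF shp]])
    show "0 \<le> Kb * (X^2 * Y^2)" using Kb0 by simp
    fix x assume x: "x \<in> {\<rho>1..\<rho>2}" and d: "sh^2 \<le> (x - rmin)^2"
    have "pm + c * sh^2 \<le> phi x"
    proof -
      have "c * sh^2 \<le> c * (x - rmin)^2" using d c by simp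
      then show ?thesis using quad x unfolding pm_def by force
    qed
    then have "- 2 * phi x / h \<le> - 2 * pm / h + - 2 * c * \<tau>"
      using hp unfolding \<tau>_def by (simp add: field_simps)
    then have ex: "exp (- 2 * phi x / h) \<le> X * Y"
      unfolding X_def Y_def by (simp add: exp_add[symmetric])
    have "F x \<le> exp (- 2 * phi x / h) * (Kb * exp (- 2 * phi x / h))"
      unfolding F_def using pw[OF xin[OF x]] by (intro mult_left_mono) auto
    also have "\<dots> = Kb * (exp (- 2 * phi x / h))^2" by (simp add: power2_eq_square)
    also have "\<dots> \<le> Kb * (X * Y)^2"
      using ex Kb0 by (intro mult_left_mono power_mono) auto
    finally show "F x \<le> Kb * (X^2 * Y^2)" by (simp add: power_mult_distrib)
  qed
  have sd2: "\<rho>1 \<le> rmin - \<eta> * sh" "rmin + \<eta> * sh \<le> \<rho>2"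
  proof -
    have "\<eta> * sh \<le> 1 * sh" using \<eta>1 shp by (intro mult_right_mono) auto
    then show "\<rho>1 \<le> rmin - \<eta> * sh" "rmin + \<eta> * sh \<le> \<rho>2" using sd1 by auto
  qed
  have E2: "integral S G - integral {rmin - \<eta> * sh..rmin + \<eta> * sh} G \<le> L * (Kb * (X * Z))"
    unfolding S_def L_def
  proof (rule out_bound[OF cG[unfolded S_def] sd2])
    show "0 \<le> \<eta> * sh" using \<eta>0 shp by simp
    show "0 \<le> Kb * (X * Z)" using Kb0 X0 by simp
    fix x assume x: "x \<in> {\<rho>1..\<rho>2}" and d: "(\<eta> * sh)^2 \<le> (x - rmin)^2"
    have "pm + c * \<eta>^2 * sh^2 \<le> phi x"
    proof -
      have "c * (\<eta> * sh)^2 \<le> c * (x - rmin)^2" using d c by simp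
      then show ?thesis using quad x unfolding pm_def by (force simp: power_mult_distrib mult.assoc)
    qed
    then have "- 2 * phi x / h \<le> - 2 * pm / h + - 2 * (c * \<eta>^2) * \<tau>"
      using hp unfolding \<tau>_def by (simp add: field_simps)
    then have ex: "exp (- 2 * phi x / h) \<le> X * Z"
      unfolding X_def Z_def by (simp add: exp_add[symmetric])
    have "G x \<le> Kb * exp (- 2 * phi x / h)" using pw[OF xin[OF x]] .
    also have "\<dots> \<le> Kb * (X * Z)" using ex Kb0 by (intro mult_left_mono) auto
    finally show "G x \<le> Kb * (X * Z)" .
  qed
  have Isub: "{rmin - \<eta> * sh..rmin + \<eta> * sh} \<subseteq> S" using sd2 by (auto simp: S_def)
  have E3: "X * Y * integral {rmin - \<eta> * sh..rmin + \<eta> * sh} G \<le> integral {rmin - \<eta> * sh..rmin + \<eta> * sh} F"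
  proof -
    have "integral {rmin - \<eta> * sh..rmin + \<eta> * sh} (\<lambda>x. X * Y * G x) \<le> integral {rmin - \<eta> * sh..rmin + \<eta> * sh} F"
    proof (rule integral_le)
      show "(\<lambda>x. X * Y * G x) integrable_on {rmin - \<eta> * sh..rmin + \<eta> * sh}"
        by (rule integrable_continuous_interval) (use continuous_on_subset[OF cG Isub] in \<open>intro continuous_intros\<close>)
      show "F integrable_on {rmin - \<eta> * sh..rmin + \<eta> * sh}"
        by (rule integrable_continuous_interval) (use continuous_on_subset[OF cF Isub] in simp)
      fix x assume x: "x \<in> {rmin - \<eta> * sh..rmin + \<eta> * sh}"
      have xS: "x \<in> S" using x Isub by auto
      have "\<bar>x - rmin\<bar> \<le> \<eta> * sh" using x by auto
      then have "(x - rmin)^2 \<le> (\<eta> * sh)^2" by (metis abs_le_square_iff abs_of_nonneg shp \<eta>0 less_imp_le mult_nonneg_nonneg)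
      then have "c' * (x - rmin)^2 \<le> c' * (\<eta> * sh)^2" using c' by simp
      also have "\<dots> = (c' * \<eta>^2) * sh^2" by (simp add: power_mult_distrib)
      also have "\<dots> \<le> c * sh^2" using \<eta>c by (simp add: mult_right_mono)
      finally have "phi x \<le> pm + c * sh^2" using quad xS unfolding pm_def S_def by force
      then have "2 * phi x / h \<le> 2 * (pm + c * sh^2) / h"
        using hp by (intro divide_right_mono) auto
      moreover have "- 2 * pm / h + - 2 * c * \<tau> = - (2 * (pm + c * sh^2) / h)"
        unfolding \<tau>_def by (simp add: algebra_simps add_divide_distrib)
      moreover have "- 2 * phi x / h = - (2 * phi x / h)" by simp
      ultimately have "- 2 * pm / h + - 2 * c * \<tau> \<le> - 2 * phi x / h" by linarith
      then have "X * Y \<le> exp (- 2 * phi x / h)"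
        unfolding X_def Y_def by (simp add: exp_add[symmetric])
      then show "X * Y * G x \<le> F x" unfolding F_def using G0 by (intro mult_right_mono) auto
    qed
    then show ?thesis by (simp add: integral_cmult_real)
  qed
  have MTI: "integral {rmin - \<eta> * sh..rmin + \<eta> * sh} F \<le> integral S F"
    by (rule integral_subset_le[OF Isub])
       (use continuous_on_subset[OF cF Isub] cF in \<open>auto simp: S_def F0 intro!: integrable_continuous_interval\<close>)
  have MTA: "A \<le> integral S F"
    unfolding A_def
  proof (rule integral_le)
    show "G integrable_on S" using cG unfolding S_def by (rule integrable_continuous_interval)
    show "F integrable_on S" using cF unfolding S_def by (rule integrable_continuous_interval)
    fix x assume "x \<in> S"
    then have "phi x \<le> 0" using quad by (auto simp: S_def)
    then have "1 \<le> exp (- 2 * phi x / h)" using hp by (simp add: divide_nonpos_pos)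
    then show "G x \<le> F x" unfolding F_def using G0[of x] by (simp add: mult_le_cancel_right1)
  qed
  have MTpos: "integral S F > 0" using MTA Apos by simp
  have Wsub: "{rmin - sh..rmin + sh} \<subseteq> S" using sd1 by (auto simp: S_def)
  have MW0: "integral {rmin - sh..rmin + sh} F \<ge> 0"
    by (rule integral_nonneg) (use continuous_on_subset[OF cF Wsub] in \<open>auto simp: F0 intro!: integrable_continuous_interval\<close>)

  define MT where "MT = integral S F"
  define MW where "MW = integral {rmin - sh..rmin + sh} F"
  define GI where "GI = integral {rmin - \<eta> * sh..rmin + \<eta> * sh} G"
  define Hm where "Hm = h^N * h powr (-1/2)"
  define R where "R = 2 * h^N * (h powr (-1/2) * exp (- 2 * phi rmin / h) * lam)"
  have Hm0: "Hm \<ge> 0" unfolding Hm_def using hp by simp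
  have RHm: "R = 2 * (Hm * X * lam)" unfolding R_def Hm_def X_def pm_def by simp
  have R0: "R \<ge> 0" unfolding RHm using Hm0 X0 lam0 by simp
  have asy': "L^2 * Z \<le> Hm * h^2"
  proof -
    have "h powr (-1/2) * h powr 2 = h powr (3/2)" using powr_add[of h "-1/2" 2] by simp
    then have "h powr (3/2) = h powr (-1/2) * h^2" using hp by simp
    then have "h^N * h powr (3/2) = Hm * h^2" unfolding Hm_def by simp
    moreover have "(\<rho>2 - \<rho>1)^2 * exp (-2 * (c * \<eta>^2) * ((h powr \<alpha>)^2 / h)) = L^2 * Z"
      unfolding L_def Z_def \<tau>_def sh_def ..
    ultimately show ?thesis using asy by simp
  qed
  have main: "1 - MW / MT \<le> R"
  proof (cases "R \<ge> 1")
    case True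
    have "MW / MT \<ge> 0" using MW0 MTpos unfolding MW_def MT_def by simp
    then show ?thesis using True by simp
  next
    case False
    have a: "Hm * X * lam \<le> 1/2" using False RHm by simp
    have h2: "h^2 > 0" using hp by simp
    have b1: "L * (Kb * (X * Z)) = (L^2 * Z) * (lam * A * X) / h^2"
      unfolding Kb_def by (simp add: power2_eq_square field_simps)
    have "(L^2 * Z) * (lam * A * X) / h^2 \<le> (Hm * h^2) * (lam * A * X) / h^2"
      using asy' lA X0 by (intro divide_right_mono mult_right_mono) (auto simp: mult_nonneg_nonneg)
    also have "\<dots> = (Hm * X * lam) * A" using h2 by (simp add: field_simps)
    also have "\<dots> \<le> (1/2) * A" using a Apos by (intro mult_right_mono) auto
    finally have q: "(L^2 * Z) * (lam * A * X) / h^2 \<le> (1/2) * A" .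
    have "A - GI \<le> A / 2" using E2[folded A_def GI_def] b1 q by linarith
    then have GI: "GI \<ge> A / 2" by simp
    have c1: "MT \<ge> X * Y * (A / 2)"
    proof -
      have "X * Y * (A / 2) \<le> X * Y * GI" using GI X0 by (intro mult_left_mono) auto
      also have "\<dots> \<le> MT" using E3 MTI unfolding GI_def MT_def by simp
      finally show ?thesis .
    qed
    have d1: "MT - MW \<le> Hm * (lam * A * X^2 * Y)"
    proof -
      have "MT - MW \<le> L * (Kb * (X^2 * Y^2))" using E1 unfolding MT_def MW_def .
      also have "\<dots> = (L^2 * Y) * (lam * A * X^2 * Y) / h^2"
        unfolding Kb_def by (simp add: power2_eq_square field_simps)
      also have "\<dots> \<le> (L^2 * Z) * (lam * A * X^2 * Y) / h^2"
        using YZ lA X0 by (intro divide_right_mono mult_right_mono) (auto simp: mult_nonneg_nonneg mult_left_mono)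
      also have "\<dots> \<le> (Hm * h^2) * (lam * A * X^2 * Y) / h^2"
        using asy' lA X0 by (intro divide_right_mono mult_right_mono) (auto simp: mult_nonneg_nonneg)
      also have "\<dots> = Hm * (lam * A * X^2 * Y)" using h2 by (simp add: field_simps)
      finally show ?thesis .
    qed
    have e1: "R * MT \<ge> Hm * (lam * A * X^2 * Y)"
    proof -
      have "R * MT \<ge> R * (X * Y * (A / 2))" using c1 R0 by (intro mult_left_mono) auto
      moreover have "R * (X * Y * (A / 2)) = Hm * (lam * A * X^2 * Y)"
        unfolding RHm by (simp add: power2_eq_square algebra_simps)
      ultimately show ?thesis by linarith
    qed
    have "MT - MW \<le> R * MT" using d1 e1 by linarith
    then have "(MT - MW) / MT \<le> R" using MTpos unfolding MT_def by (simp add: divide_le_eq)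
    then show ?thesis using MTpos unfolding MT_def by (simp add: diff_divide_distrib)
  qed
  show ?thesis
  proof (intro conjI)
    show "0 < wmass phi h v \<rho>1 \<rho>2" using MTpos by (simp add: wm S_def)
    show "continuous_on {\<rho>1..\<rho>2} (\<lambda>r. exp (- 2 * phi r / h) * (cmod (v r))^2)"
      using cF unfolding F_def G_def S_def .
    show "1 - wmass phi h v (rmin - h powr \<alpha>) (rmin + h powr \<alpha>) / wmass phi h v \<rho>1 \<rho>2
           \<le> 2 * h^N * (h powr (-1/2) * exp (- 2 * phi rmin / h) * lam)"
      using main unfolding wm MT_def MW_def R_def sh_def S_def .
  qed
qed

lemma int_mono_sub:
  fixes f :: "real \<Rightarrow> real"
  assumes cont: "continuous_on {p..q} f" and nn: "\<forall>x\<in>{p..q}. 0 \<le> f x"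
    and "p \<le> a'" "a' \<le> a" "b \<le> b'" "b' \<le> q"
  shows "integral {a..b} f \<le> integral {a'..b'} f"
proof (rule integral_subset_le)
  show "{a..b} \<subseteq> {a'..b'}" using assms by auto
  show "f integrable_on {a..b}"
    by (rule integrable_continuous_interval, rule continuous_on_subset[OF cont]) (use assms in auto)
  show "f integrable_on {a'..b'}"
    by (rule integrable_continuous_interval, rule continuous_on_subset[OF cont]) (use assms in auto)
  show "\<forall>x\<in>{a'..b'}. 0 \<le> f x" using nn assms by auto
qed

theorem mainTheorem9:
  fixes \<rho>1 \<rho>2 rmin \<alpha> :: real and B phi dphi ddphi :: "real \<Rightarrow> real" and N :: nat
  assumes "0 < \<rho>1" and "\<rho>1 < \<rho>2"
    and "smooth_on_interval \<rho>1 \<rho>2 B"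
    and "\<forall>x\<in>{\<rho>1..\<rho>2}. B x > 0"
    and "\<forall>x\<in>{\<rho>1..\<rho>2}. (phi has_real_derivative dphi x) (at x within {\<rho>1..\<rho>2})"
    and "\<forall>x\<in>{\<rho>1..\<rho>2}. (dphi has_real_derivative ddphi x) (at x within {\<rho>1..\<rho>2})"
    and "\<forall>x\<in>{\<rho>1<..<\<rho>2}. ddphi x + dphi x / x = B x"
    and "phi \<rho>1 = 0" and "phi \<rho>2 = 0"
    and "rmin \<in> {\<rho>1<..<\<rho>2}"
    and "\<forall>x\<in>{\<rho>1..\<rho>2}. x \<noteq> rmin \<longrightarrow> phi rmin < phi x"
    and "phi rmin < 0"
    and "0 < \<alpha>" and "\<alpha> < 1/2"
  shows "(\<exists>h0>0. \<exists>C>0. \<forall>h\<in>{0<..h0}. \<forall>m::real. \<forall>v.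
            is_eigenpair \<rho>1 \<rho>2 B dphi h m (lowest_eig \<rho>1 \<rho>2 B dphi h m) v \<longrightarrow>
            0 \<le> 1 - wmass phi h v (rmin - h powr \<alpha>) (rmin + h powr \<alpha>) / wmass phi h v \<rho>1 \<rho>2 \<and>
            1 - wmass phi h v (rmin - h powr \<alpha>) (rmin + h powr \<alpha>) / wmass phi h v \<rho>1 \<rho>2
              \<le> C * h ^ N * f1h \<rho>1 \<rho>2 B dphi (phi rmin) h m)
       \<and> (\<exists>\<delta>0>0. \<forall>\<delta>\<in>{0<..<\<delta>0}. \<exists>h0>0. \<exists>C>0. \<forall>h\<in>{0<..h0}. \<forall>m::real. \<forall>v.
            is_eigenpair \<rho>1 \<rho>2 B dphi h m (lowest_eig \<rho>1 \<rho>2 B dphi h m) v \<longrightarrow>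
            0 \<le> 1 - wmass phi h v (\<rho>1 + \<delta>) (\<rho>2 - \<delta>) / wmass phi h v \<rho>1 \<rho>2 \<and>
            1 - wmass phi h v (\<rho>1 + \<delta>) (\<rho>2 - \<delta>) / wmass phi h v \<rho>1 \<rho>2
              \<le> C * h ^ N * f1h \<rho>1 \<rho>2 B dphi (phi rmin) h m)"
proof -
  have r1: "0 < \<rho>1" and r12: "\<rho>1 < \<rho>2" using assms(1,2) .
  have rmin: "rmin \<in> {\<rho>1<..<\<rho>2}" by (rule assms(10))
  have Bc: "continuous_on {\<rho>1..\<rho>2} B"
  proof -
    obtain D where D0: "\<forall>x\<in>{\<rho>1..\<rho>2}. D 0 x = B x"
      and Dd: "\<forall>k. \<forall>x\<in>{\<rho>1..\<rho>2}. (D k has_real_derivative D (Suc k) x) (at x within {\<rho>1..\<rho>2})"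
      using assms(3) unfolding smooth_on_interval_def by blast
    have "continuous_on {\<rho>1..\<rho>2} (D 0)" by (rule DERIV_continuous_on[where D="D 1"]) (use Dd in auto)
    then show ?thesis by (rule continuous_on_eq) (use D0 in auto)
  qed
  obtain c c' where c: "c > 0" and c': "c' > 0"
    and quad: "\<forall>x\<in>{\<rho>1..\<rho>2}. phi rmin + c*(x-rmin)^2 \<le> phi x
            \<and> phi x \<le> phi rmin + c'*(x-rmin)^2 \<and> phi x \<le> 0"
    using phi_quad[OF assms(1,2) Bc assms(4-11)] by blast
  define \<eta> where "\<eta> = min 1 (c / c')"
  have \<eta>0: "\<eta> > 0" using c c' by (simp add: \<eta>_def)
  have \<eta>1: "\<eta> \<le> 1" by (simp add: \<eta>_def)
  have \<eta>c: "c' * \<eta>^2 \<le> c"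
  proof -
    have "\<eta>^2 \<le> \<eta> * 1" using \<eta>0 \<eta>1 by (simp add: power2_eq_square mult_left_mono)
    then have "c' * \<eta>^2 \<le> c' * \<eta>" using c' by (simp add: mult_left_mono)
    also have "\<dots> \<le> c' * (c / c')" using c' by (intro mult_left_mono) (auto simp: \<eta>_def)
    also have "\<dots> = c" using c' by simp
    finally show ?thesis .
  qed
  have \<kappa>: "c * \<eta>^2 > 0" using c \<eta>0 by simp
  obtain h1 where h1: "h1 > 0" and H1: "\<forall>h. 0 < h \<and> h \<le> h1 \<longrightarrow>
      (\<rho>2 - \<rho>1)^2 * exp (-2 * (c * \<eta>^2) * ((h powr \<alpha>)^2 / h)) \<le> h^N * h powr (3/2)"
    using asym[OF assms(13,14) \<kappa>, of "\<rho>2 - \<rho>1" N] by blast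
  define d0 where "d0 = min (rmin - \<rho>1) (\<rho>2 - rmin)"
  have d0: "d0 > 0" using rmin by (simp add: d0_def)
  have hs: "h powr \<alpha> \<le> d" if "0 < h" "0 < d" "h \<le> d powr (1/\<alpha>)" for h d
  proof -
    have "h powr \<alpha> \<le> (d powr (1/\<alpha>)) powr \<alpha>"
      by (rule powr_mono2) (use that assms(13) in auto)
    also have "\<dots> = d" using assms(13) that(2) by (simp add: powr_powr)
    finally show ?thesis .
  qed
  define h0 where "h0 = min h1 (d0 powr (1/\<alpha>))"
  have h0: "h0 > 0" using h1 d0 by (simp add: h0_def)
  have core': "0 < wmass phi h v \<rho>1 \<rho>2 \<and>
         continuous_on {\<rho>1..\<rho>2} (\<lambda>r. exp (- 2 * phi r / h) * (cmod (v r))^2) \<and>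
         1 - wmass phi h v (rmin - h powr \<alpha>) (rmin + h powr \<alpha>) / wmass phi h v \<rho>1 \<rho>2
           \<le> 2 * h ^ N * f1h \<rho>1 \<rho>2 B dphi (phi rmin) h m"
    if h: "h \<in> {0<..h0}" and eig: "is_eigenpair \<rho>1 \<rho>2 B dphi h m (lowest_eig \<rho>1 \<rho>2 B dphi h m) v" for h m v
  proof -
    have hp: "h > 0" using h by simp
    have sd: "h powr \<alpha> \<le> min (rmin - \<rho>1) (\<rho>2 - rmin)"
      using hs[OF hp d0] h unfolding h0_def d0_def by auto
    have asy: "(\<rho>2 - \<rho>1)^2 * exp (-2 * (c * \<eta>^2) * ((h powr \<alpha>)^2 / h)) \<le> h^N * h powr (3/2)"
      using H1 h unfolding h0_def by auto
    show ?thesis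
      using core[OF r1 r12 assms(5,6,7) quad c c' \<eta>0 \<eta>1 \<eta>c hp sd asy eig]
      unfolding f1h_def by simp
  qed
  have Fnn: "\<forall>x\<in>{\<rho>1..\<rho>2}. 0 \<le> exp (- 2 * phi x / h) * (cmod (v x))^2" for h v
    by simp
  show ?thesis
  proof (intro conjI)
    show "\<exists>h0>0. \<exists>C>0. \<forall>h\<in>{0<..h0}. \<forall>m::real. \<forall>v.
            is_eigenpair \<rho>1 \<rho>2 B dphi h m (lowest_eig \<rho>1 \<rho>2 B dphi h m) v \<longrightarrow>
            0 \<le> 1 - wmass phi h v (rmin - h powr \<alpha>) (rmin + h powr \<alpha>) / wmass phi h v \<rho>1 \<rho>2 \<and>
            1 - wmass phi h v (rmin - h powr \<alpha>) (rmin + h powr \<alpha>) / wmass phi h v \<rho>1 \<rho>2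
              \<le> C * h ^ N * f1h \<rho>1 \<rho>2 B dphi (phi rmin) h m"
    proof (rule exI[of _ h0], intro conjI h0, rule exI[of _ "2::real"], intro conjI ballI allI impI)
      show "(0::real) < 2" by simp
      fix h m v assume h: "h \<in> {0<..h0}"
        and eig: "is_eigenpair \<rho>1 \<rho>2 B dphi h m (lowest_eig \<rho>1 \<rho>2 B dphi h m) v"
      note cc = core'[OF h eig]
      have hp: "h > 0" using h by simp
      have sd: "h powr \<alpha> \<le> min (rmin - \<rho>1) (\<rho>2 - rmin)"
        using hs[OF hp d0] h unfolding h0_def d0_def by auto
      have "wmass phi h v (rmin - h powr \<alpha>) (rmin + h powr \<alpha>) \<le> wmass phi h v \<rho>1 \<rho>2"
        unfolding wmass_def by (rule int_mono_sub[OF conjunct1[OF conjunct2[OF cc]] Fnn]) (use sd in auto)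
      then show "0 \<le> 1 - wmass phi h v (rmin - h powr \<alpha>) (rmin + h powr \<alpha>) / wmass phi h v \<rho>1 \<rho>2"
        using conjunct1[OF cc] by (simp add: divide_le_eq)
      show "1 - wmass phi h v (rmin - h powr \<alpha>) (rmin + h powr \<alpha>) / wmass phi h v \<rho>1 \<rho>2
              \<le> 2 * h ^ N * f1h \<rho>1 \<rho>2 B dphi (phi rmin) h m"
        using cc by blast
    qed
  next
    show "\<exists>\<delta>0>0. \<forall>\<delta>\<in>{0<..<\<delta>0}. \<exists>h0>0. \<exists>C>0. \<forall>h\<in>{0<..h0}. \<forall>m::real. \<forall>v.
            is_eigenpair \<rho>1 \<rho>2 B dphi h m (lowest_eig \<rho>1 \<rho>2 B dphi h m) v \<longrightarrow>
            0 \<le> 1 - wmass phi h v (\<rho>1 + \<delta>) (\<rho>2 - \<delta>) / wmass phi h v \<rho>1 \<rho>2 \<and>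
            1 - wmass phi h v (\<rho>1 + \<delta>) (\<rho>2 - \<delta>) / wmass phi h v \<rho>1 \<rho>2
              \<le> C * h ^ N * f1h \<rho>1 \<rho>2 B dphi (phi rmin) h m"
    proof (rule exI[of _ d0], intro conjI d0 ballI)
      fix \<delta> :: real assume \<delta>: "\<delta> \<in> {0<..<d0}"
      define h0' where "h0' = min h0 ((d0 - \<delta>) powr (1/\<alpha>))"
      have h0': "h0' > 0" using h0 \<delta> by (simp add: h0'_def)
      show "\<exists>h0>0. \<exists>C>0. \<forall>h\<in>{0<..h0}. \<forall>m::real. \<forall>v.
            is_eigenpair \<rho>1 \<rho>2 B dphi h m (lowest_eig \<rho>1 \<rho>2 B dphi h m) v \<longrightarrow>
            0 \<le> 1 - wmass phi h v (\<rho>1 + \<delta>) (\<rho>2 - \<delta>) / wmass phi h v \<rho>1 \<rho>2 \<and>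
            1 - wmass phi h v (\<rho>1 + \<delta>) (\<rho>2 - \<delta>) / wmass phi h v \<rho>1 \<rho>2
              \<le> C * h ^ N * f1h \<rho>1 \<rho>2 B dphi (phi rmin) h m"
      proof (rule exI[of _ h0'], intro conjI h0', rule exI[of _ "2::real"], intro conjI ballI allI impI)
        show "(0::real) < 2" by simp
        fix h m v assume h: "h \<in> {0<..h0'}"
          and eig: "is_eigenpair \<rho>1 \<rho>2 B dphi h m (lowest_eig \<rho>1 \<rho>2 B dphi h m) v"
        have hh: "h \<in> {0<..h0}" using h by (auto simp: h0'_def)
        note cc = core'[OF hh eig]
        have hp: "h > 0" using h by simp
        have sd: "h powr \<alpha> \<le> d0 - \<delta>"
          using hs[OF hp, of "d0 - \<delta>"] h \<delta> unfolding h0'_def by auto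
        have cF: "continuous_on {\<rho>1..\<rho>2} (\<lambda>r. exp (- 2 * phi r / h) * (cmod (v r))^2)"
          using cc by blast
        have MT: "0 < wmass phi h v \<rho>1 \<rho>2" using cc by blast
        have d0': "d0 \<le> rmin - \<rho>1" "d0 \<le> \<rho>2 - rmin" by (auto simp: d0_def)
        have m1: "wmass phi h v (rmin - h powr \<alpha>) (rmin + h powr \<alpha>) \<le> wmass phi h v (\<rho>1 + \<delta>) (\<rho>2 - \<delta>)"
          unfolding wmass_def by (rule int_mono_sub[OF cF Fnn]) (use sd \<delta> d0' in auto)
        have m2: "wmass phi h v (\<rho>1 + \<delta>) (\<rho>2 - \<delta>) \<le> wmass phi h v \<rho>1 \<rho>2"
          unfolding wmass_def by (rule int_mono_sub[OF cF Fnn]) (use \<delta> in auto)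
        show "0 \<le> 1 - wmass phi h v (\<rho>1 + \<delta>) (\<rho>2 - \<delta>) / wmass phi h v \<rho>1 \<rho>2"
          using m2 MT by (simp add: divide_le_eq)
        have "wmass phi h v (rmin - h powr \<alpha>) (rmin + h powr \<alpha>) / wmass phi h v \<rho>1 \<rho>2
              \<le> wmass phi h v (\<rho>1 + \<delta>) (\<rho>2 - \<delta>) / wmass phi h v \<rho>1 \<rho>2"
          using m1 MT by (simp add: divide_right_mono)
        then show "1 - wmass phi h v (\<rho>1 + \<delta>) (\<rho>2 - \<delta>) / wmass phi h v \<rho>1 \<rho>2
              \<le> 2 * h ^ N * f1h \<rho>1 \<rho>2 B dphi (phi rmin) h m"
          using cc by linarith
      qed
    qed
  qed
qed

end
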